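(* Let $k$ be a field, $V$ a $k$-vector space and $\varphi,\psi\in\mathrm{End}_k(V)$ finite potent endomorphisms such that the commutator $\varphi\psi-\psi\varphi$ has finite rank. Then $\varphi+\psi$ is finite potent.
   Context: An endomorphism $\varphi$ of $V$ is finite potent if $\varphi^nV$ is finite dimensional for some $n$. *)

theory Defs
  imports Complex_Main
begin

definition fin_dim :: "('k::field \<Rightarrow> 'v::ab_group_add \<Rightarrow> 'v) \<Rightarrow> 'v set \<Rightarrow> bool" where
  "fin_dim scale W \<longleftrightarrow> (\<exists>B. finite B \<and> B \<subseteq> W \<and> Modules.module.span scale B = W)"

definition finite_potent :: "('k::field \<Rightarrow> 'v::ab_group_add \<Rightarrow> 'v) \<Rightarrow> ('v \<Rightarrow> 'v) \<Rightarrow> bool" where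
  "finite_potent scale f \<longleftrightarrow> (\<exists>n. fin_dim scale (range (f ^^ n)))"

definition finite_rank :: "('k::field \<Rightarrow> 'v::ab_group_add \<Rightarrow> 'v) \<Rightarrow> ('v \<Rightarrow> 'v) \<Rightarrow> bool" where
  "finite_rank scale f \<longleftrightarrow> fin_dim scale (range f)"

end

theory Submission
  imports Defs
begin

definition FR :: "('k::field \<Rightarrow> 'v::ab_group_add \<Rightarrow> 'v) \<Rightarrow> ('v \<Rightarrow> 'v) \<Rightarrow> bool" where
  "FR scale f \<longleftrightarrow> Vector_Spaces.linear scale scale f \<and>
     (\<exists>B. finite B \<and> range f \<subseteq> Modules.module.span scale B)"

context vector_space
begin

lemma lin_add: "Vector_Spaces.linear scale scale f \<Longrightarrow> Vector_Spaces.linear scale scale g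
  \<Longrightarrow> Vector_Spaces.linear scale scale (\<lambda>x. f x + g x)"
  unfolding Vector_Spaces.linear_iff by (simp add: algebra_simps scale_right_distrib)

lemma lin_diff: "Vector_Spaces.linear scale scale f \<Longrightarrow> Vector_Spaces.linear scale scale g
  \<Longrightarrow> Vector_Spaces.linear scale scale (\<lambda>x. f x - g x)"
  unfolding Vector_Spaces.linear_iff by (simp add: algebra_simps scale_right_diff_distrib)

lemma lin_comp: "Vector_Spaces.linear scale scale f \<Longrightarrow> Vector_Spaces.linear scale scale g
  \<Longrightarrow> Vector_Spaces.linear scale scale (\<lambda>x. g (f x))"
  unfolding Vector_Spaces.linear_iff by simp

lemma lin_zero: "Vector_Spaces.linear scale scale (\<lambda>x. 0)"
  unfolding Vector_Spaces.linear_iff by (simp add: vector_space_axioms)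

lemma lin_pow: "Vector_Spaces.linear scale scale f \<Longrightarrow> Vector_Spaces.linear scale scale (f ^^ k)"
proof (induction k)
  case 0 then show ?case using linear_id by (simp add: id_def)
next
  case (Suc k)
  then show ?case using lin_comp[OF Suc.IH Suc.prems] by (simp add: comp_def)
qed

lemma lin_additive: "Vector_Spaces.linear scale scale f \<Longrightarrow> f (x + y) = f x + f y"
  unfolding Vector_Spaces.linear_iff by simp

lemma lin_diffE: "Vector_Spaces.linear scale scale f \<Longrightarrow> f (x - y) = f x - f y"
  by (metis add_diff_cancel diff_add_cancel lin_additive)

lemma lin_0: "Vector_Spaces.linear scale scale f \<Longrightarrow> f 0 = 0"
  by (metis add_cancel_right_right lin_additive)

lemma FR_add: "FR scale f \<Longrightarrow> FR scale g \<Longrightarrow> FR scale (\<lambda>x. f x + g x)"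
proof -
  assume a: "FR scale f" "FR scale g"
  then obtain B1 B2 where b: "finite B1" "range f \<subseteq> span B1" "finite B2" "range g \<subseteq> span B2"
    unfolding FR_def by blast
  have "range (\<lambda>x. f x + g x) \<subseteq> span (B1 \<union> B2)"
  proof
    fix y assume "y \<in> range (\<lambda>x. f x + g x)"
    then obtain x where "y = f x + g x" by auto
    moreover have "f x \<in> span (B1 \<union> B2)" using b span_mono[of B1 "B1 \<union> B2"] by blast
    moreover have "g x \<in> span (B1 \<union> B2)" using b span_mono[of B2 "B1 \<union> B2"] by blast
    ultimately show "y \<in> span (B1 \<union> B2)" using span_add by blast
  qed
  then show ?thesis using a b lin_add unfolding FR_def by blast
qed

lemma FR_diff: "FR scale f \<Longrightarrow> FR scale g \<Longrightarrow> FR scale (\<lambda>x. f x - g x)"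
proof -
  assume a: "FR scale f" "FR scale g"
  then obtain B1 B2 where b: "finite B1" "range f \<subseteq> span B1" "finite B2" "range g \<subseteq> span B2"
    unfolding FR_def by blast
  have "range (\<lambda>x. f x - g x) \<subseteq> span (B1 \<union> B2)"
  proof
    fix y assume "y \<in> range (\<lambda>x. f x - g x)"
    then obtain x where "y = f x - g x" by auto
    moreover have "f x \<in> span (B1 \<union> B2)" using b span_mono[of B1 "B1 \<union> B2"] by blast
    moreover have "g x \<in> span (B1 \<union> B2)" using b span_mono[of B2 "B1 \<union> B2"] by blast
    ultimately show "y \<in> span (B1 \<union> B2)" using span_diff by blast
  qed
  then show ?thesis using a b lin_diff unfolding FR_def by blast
qed

lemma FR_left: "FR scale f \<Longrightarrow> Vector_Spaces.linear scale scale g \<Longrightarrow> FR scale (\<lambda>x. g (f x))"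
proof -
  assume a: "FR scale f" and g: "Vector_Spaces.linear scale scale g"
  then obtain B where b: "finite B" "range f \<subseteq> span B" unfolding FR_def by blast
  interpret L: Vector_Spaces.linear scale scale g by fact
  have "range (\<lambda>x. g (f x)) \<subseteq> g ` span B" using b by auto
  also have "\<dots> = span (g ` B)" using L.span_image by simp
  finally show ?thesis using a g b lin_comp unfolding FR_def by blast
qed

lemma FR_right: "FR scale f \<Longrightarrow> Vector_Spaces.linear scale scale h \<Longrightarrow> FR scale (\<lambda>x. f (h x))"
proof -
  assume a: "FR scale f" and h: "Vector_Spaces.linear scale scale h"
  then obtain B where b: "finite B" "range f \<subseteq> span B" unfolding FR_def by blast
  have "range (\<lambda>x. f (h x)) \<subseteq> span B" using b by auto
  then show ?thesis using a h b lin_comp unfolding FR_def by blast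
qed

lemma FR_zero: "FR scale (\<lambda>x. 0)"
proof -
  have "range (\<lambda>x::'b. 0::'b) \<subseteq> span {}" using span_zero by auto
  then show ?thesis unfolding FR_def using lin_zero by blast
qed

lemma FR_of_fin_dim: "Vector_Spaces.linear scale scale f \<Longrightarrow> fin_dim scale (range f) \<Longrightarrow> FR scale f"
  unfolding FR_def fin_dim_def by blast

lemma fin_dim_of_FR: "FR scale f \<Longrightarrow> fin_dim scale (range f)"
proof -
  assume a: "FR scale f"
  then obtain B where b: "finite B" "range f \<subseteq> span B" and lf: "Vector_Spaces.linear scale scale f"
    unfolding FR_def by blast
  interpret L: Vector_Spaces.linear scale scale f by fact
  have sub: "subspace (range f)" using L.subspace_image[OF subspace_UNIV] .
  obtain C where C: "C \<subseteq> range f" "independent C" "range f \<subseteq> span C" "card C = dim (range f)"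
    by (rule basis_exists)
  have "finite C" using independent_span_bound[OF b(1) C(2) subset_trans[OF C(1) b(2)]] by simp
  moreover have "span C = range f" using span_subspace[OF C(1) C(3) sub] .
  ultimately show ?thesis unfolding fin_dim_def using C(1) by (intro exI[of _ C] conjI)
qed

lemma comm_pow:
  assumes la: "Vector_Spaces.linear scale scale a" and lb: "Vector_Spaces.linear scale scale b"
    and c: "FR scale (\<lambda>x. a (b x) - b (a x))"
  shows "FR scale (\<lambda>x. a ((b ^^ k) x) - (b ^^ k) (a x))"
proof (induction k)
  case 0 then show ?case using FR_zero by simp
next
  case (Suc k)
  have l: "Vector_Spaces.linear scale scale (b ^^ k)" using lin_pow[OF lb] .
  have 1: "FR scale (\<lambda>x. a (b ((b ^^ k) x)) - b (a ((b ^^ k) x)))"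
    using FR_right[OF c l] by simp
  have 2: "FR scale (\<lambda>x. b (a ((b ^^ k) x) - (b ^^ k) (a x)))"
    using FR_left[OF Suc.IH lb] by simp
  have "FR scale (\<lambda>x. (a (b ((b ^^ k) x)) - b (a ((b ^^ k) x))) + b (a ((b ^^ k) x) - (b ^^ k) (a x)))"
    using FR_add[OF 1 2] by simp
  moreover have "(\<lambda>x. (a (b ((b ^^ k) x)) - b (a ((b ^^ k) x))) + b (a ((b ^^ k) x) - (b ^^ k) (a x)))
     = (\<lambda>x. a ((b ^^ Suc k) x) - (b ^^ Suc k) (a x))"
    by (rule ext) (simp add: lin_diffE[OF lb])
  ultimately show ?case by simp
qed

lemma main_step:
  assumes lp: "Vector_Spaces.linear scale scale \<phi>" and lq: "Vector_Spaces.linear scale scale \<psi>"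
    and c: "FR scale (\<lambda>x. \<phi> (\<psi> x) - \<psi> (\<phi> x))"
  shows "\<exists>A B. Vector_Spaces.linear scale scale A \<and> Vector_Spaces.linear scale scale B \<and>
     FR scale (\<lambda>x. ((\<lambda>x. \<phi> x + \<psi> x) ^^ (p + q)) x - ((\<phi> ^^ p) (A x) + (\<psi> ^^ q) (B x)))"
proof (induction p arbitrary: q)
  let ?T = "\<lambda>x. \<phi> x + \<psi> x"
  have lT: "Vector_Spaces.linear scale scale ?T" using lin_add[OF lp lq] .
  case 0
  have "(\<lambda>x. (?T ^^ (0 + q)) x - ((\<phi> ^^ 0) ((?T ^^ q) x) + (\<psi> ^^ q) 0)) = (\<lambda>x. 0)"
    using lin_0[OF lin_pow[OF lq]] by simp
  then have "FR scale (\<lambda>x. (?T ^^ (0 + q)) x - ((\<phi> ^^ 0) ((?T ^^ q) x) + (\<psi> ^^ q) 0))"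
    using FR_zero by simp
  then show ?case using lin_pow[OF lT] lin_zero by blast
next
  let ?T = "\<lambda>x. \<phi> x + \<psi> x"
  have lT: "Vector_Spaces.linear scale scale ?T" using lin_add[OF lp lq] .
  case (Suc p)
  note outerIH = Suc.IH
  show ?case
  proof (induction q)
    case 0
    have "(\<lambda>x. (?T ^^ (Suc p + 0)) x - ((\<phi> ^^ Suc p) 0 + (\<psi> ^^ 0) ((?T ^^ Suc p) x))) = (\<lambda>x. 0)"
      using lin_0[OF lin_pow[OF lp]] lin_0[OF lp] by simp
    then have "FR scale (\<lambda>x. (?T ^^ (Suc p + 0)) x - ((\<phi> ^^ Suc p) 0 + (\<psi> ^^ 0) ((?T ^^ Suc p) x)))"
      using FR_zero by (simp only:)
    then show ?case using lin_pow[OF lT] lin_zero by blast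
  next
    case (Suc q)
    obtain A1 B1 where A1: "Vector_Spaces.linear scale scale A1" "Vector_Spaces.linear scale scale B1"
      "FR scale (\<lambda>x. (?T ^^ (p + Suc q)) x - ((\<phi> ^^ p) (A1 x) + (\<psi> ^^ Suc q) (B1 x)))"
      using outerIH[of "Suc q"] by blast
    obtain A2 B2 where A2: "Vector_Spaces.linear scale scale A2" "Vector_Spaces.linear scale scale B2"
      "FR scale (\<lambda>x. (?T ^^ (Suc p + q)) x - ((\<phi> ^^ Suc p) (A2 x) + (\<psi> ^^ q) (B2 x)))"
      using Suc.IH by blast
    have c': "FR scale (\<lambda>x. \<psi> (\<phi> x) - \<phi> (\<psi> x))"
      using FR_diff[OF FR_zero c] by (simp add: algebra_simps)
    have C1: "FR scale (\<lambda>x. \<phi> ((\<psi> ^^ Suc q) x) - (\<psi> ^^ Suc q) (\<phi> x))"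
      using comm_pow[OF lp lq c] .
    have C2: "FR scale (\<lambda>x. \<psi> ((\<phi> ^^ Suc p) x) - (\<phi> ^^ Suc p) (\<psi> x))"
      using comm_pow[OF lq lp c'] .
    define Y where "Y = (\<lambda>x. (?T ^^ (p + Suc q)) x)"
    have Y2: "(?T ^^ (Suc p + q)) = Y" unfolding Y_def by simp
    have Y3: "(?T ^^ (Suc p + Suc q)) x = \<phi> (Y x) + \<psi> (Y x)" for x
    proof -
      have "Suc p + Suc q = Suc (p + Suc q)" by simp
      then show ?thesis unfolding Y_def by (simp only: funpow.simps comp_def)
    qed
    have E1: "FR scale (\<lambda>x. Y x - ((\<phi> ^^ p) (A1 x) + (\<psi> ^^ Suc q) (B1 x)))"
      using A1(3) unfolding Y_def .
    have E2: "FR scale (\<lambda>x. Y x - ((\<phi> ^^ Suc p) (A2 x) + (\<psi> ^^ q) (B2 x)))"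
      using A2(3) unfolding Y2 .
    have F1: "FR scale (\<lambda>x. \<phi> (Y x - ((\<phi> ^^ p) (A1 x) + (\<psi> ^^ Suc q) (B1 x))))"
      using FR_left[OF E1 lp] by simp
    have F2: "FR scale (\<lambda>x. \<psi> (Y x - ((\<phi> ^^ Suc p) (A2 x) + (\<psi> ^^ q) (B2 x))))"
      using FR_left[OF E2 lq] by simp
    have F3: "FR scale (\<lambda>x. \<phi> ((\<psi> ^^ Suc q) (B1 x)) - (\<psi> ^^ Suc q) (\<phi> (B1 x)))"
      using FR_right[OF C1 A1(2)] by simp
    have F4: "FR scale (\<lambda>x. \<psi> ((\<phi> ^^ Suc p) (A2 x)) - (\<phi> ^^ Suc p) (\<psi> (A2 x)))"
      using FR_right[OF C2 A2(1)] by simp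
    have S: "FR scale (\<lambda>x. \<phi> (Y x - ((\<phi> ^^ p) (A1 x) + (\<psi> ^^ Suc q) (B1 x)))
       + (\<phi> ((\<psi> ^^ Suc q) (B1 x)) - (\<psi> ^^ Suc q) (\<phi> (B1 x)))
       + \<psi> (Y x - ((\<phi> ^^ Suc p) (A2 x) + (\<psi> ^^ q) (B2 x)))
       + (\<psi> ((\<phi> ^^ Suc p) (A2 x)) - (\<phi> ^^ Suc p) (\<psi> (A2 x))))"
      using FR_add[OF FR_add[OF FR_add[OF F1 F3] F2] F4] by simp
    have lpp: "Vector_Spaces.linear scale scale (\<phi> ^^ Suc p)" using lin_pow[OF lp] .
    have lqq: "Vector_Spaces.linear scale scale (\<psi> ^^ Suc q)" using lin_pow[OF lq] .
    have eq: "(\<lambda>x. \<phi> (Y x - ((\<phi> ^^ p) (A1 x) + (\<psi> ^^ Suc q) (B1 x)))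
       + (\<phi> ((\<psi> ^^ Suc q) (B1 x)) - (\<psi> ^^ Suc q) (\<phi> (B1 x)))
       + \<psi> (Y x - ((\<phi> ^^ Suc p) (A2 x) + (\<psi> ^^ q) (B2 x)))
       + (\<psi> ((\<phi> ^^ Suc p) (A2 x)) - (\<phi> ^^ Suc p) (\<psi> (A2 x))))
      = (\<lambda>x. (?T ^^ (Suc p + Suc q)) x - ((\<phi> ^^ Suc p) (A1 x + \<psi> (A2 x)) + (\<psi> ^^ Suc q) (\<phi> (B1 x) + B2 x)))"
    proof (rule ext)
      fix x
      have a: "(\<phi> ^^ Suc p) (A1 x + \<psi> (A2 x)) = \<phi> ((\<phi> ^^ p) (A1 x)) + (\<phi> ^^ Suc p) (\<psi> (A2 x))"
        using lin_additive[OF lpp] by simp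
      have b: "(\<psi> ^^ Suc q) (\<phi> (B1 x) + B2 x) = (\<psi> ^^ Suc q) (\<phi> (B1 x)) + \<psi> ((\<psi> ^^ q) (B2 x))"
        using lin_additive[OF lqq] by simp
      have d1: "\<phi> (Y x - ((\<phi> ^^ p) (A1 x) + (\<psi> ^^ Suc q) (B1 x)))
          = \<phi> (Y x) - (\<phi> ((\<phi> ^^ p) (A1 x)) + \<phi> ((\<psi> ^^ Suc q) (B1 x)))"
        using lin_diffE[OF lp] lin_additive[OF lp] by simp
      have d2: "\<psi> (Y x - ((\<phi> ^^ Suc p) (A2 x) + (\<psi> ^^ q) (B2 x)))
          = \<psi> (Y x) - (\<psi> ((\<phi> ^^ Suc p) (A2 x)) + \<psi> ((\<psi> ^^ q) (B2 x)))"
        using lin_diffE[OF lq] lin_additive[OF lq] by simp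
      show "\<phi> (Y x - ((\<phi> ^^ p) (A1 x) + (\<psi> ^^ Suc q) (B1 x)))
       + (\<phi> ((\<psi> ^^ Suc q) (B1 x)) - (\<psi> ^^ Suc q) (\<phi> (B1 x)))
       + \<psi> (Y x - ((\<phi> ^^ Suc p) (A2 x) + (\<psi> ^^ q) (B2 x)))
       + (\<psi> ((\<phi> ^^ Suc p) (A2 x)) - (\<phi> ^^ Suc p) (\<psi> (A2 x)))
       = (?T ^^ (Suc p + Suc q)) x - ((\<phi> ^^ Suc p) (A1 x + \<psi> (A2 x)) + (\<psi> ^^ Suc q) (\<phi> (B1 x) + B2 x))"
        unfolding Y3 a b d1 d2 by (simp add: algebra_simps)
    qed
    have "Vector_Spaces.linear scale scale (\<lambda>x. A1 x + \<psi> (A2 x))"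
      using lin_add[OF A1(1) lin_comp[OF A2(1) lq]] .
    moreover have "Vector_Spaces.linear scale scale (\<lambda>x. \<phi> (B1 x) + B2 x)"
      using lin_add[OF lin_comp[OF A1(2) lp] A2(2)] .
    ultimately show ?case using S unfolding eq by blast
  qed
qed

end

theorem lemma3p3:
  fixes scale :: "'k::field \<Rightarrow> 'v::ab_group_add \<Rightarrow> 'v"
    and \<phi> \<psi> :: "'v \<Rightarrow> 'v"
  assumes "vector_space scale"
    and "Vector_Spaces.linear scale scale \<phi>"
    and "Vector_Spaces.linear scale scale \<psi>"
    and "finite_potent scale \<phi>"
    and "finite_potent scale \<psi>"
    and "finite_rank scale (\<lambda>x. \<phi> (\<psi> x) - \<psi> (\<phi> x))"
  shows "finite_potent scale (\<lambda>x. \<phi> x + \<psi> x)"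
proof -
  interpret V: vector_space scale by fact
  obtain n where n: "fin_dim scale (range (\<phi> ^^ n))" using assms(4) unfolding finite_potent_def by blast
  obtain m where m: "fin_dim scale (range (\<psi> ^^ m))" using assms(5) unfolding finite_potent_def by blast
  have Fn: "FR scale (\<phi> ^^ n)" using V.FR_of_fin_dim[OF V.lin_pow[OF assms(2)] n] .
  have Fm: "FR scale (\<psi> ^^ m)" using V.FR_of_fin_dim[OF V.lin_pow[OF assms(3)] m] .
  have c: "FR scale (\<lambda>x. \<phi> (\<psi> x) - \<psi> (\<phi> x))"
    using V.FR_of_fin_dim[OF V.lin_diff[OF V.lin_comp[OF assms(3) assms(2)] V.lin_comp[OF assms(2) assms(3)]]]
      assms(6) unfolding finite_rank_def by blast
  obtain A B where AB: "Vector_Spaces.linear scale scale A" "Vector_Spaces.linear scale scale B"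
     "FR scale (\<lambda>x. ((\<lambda>x. \<phi> x + \<psi> x) ^^ (n + m)) x - ((\<phi> ^^ n) (A x) + (\<psi> ^^ m) (B x)))"
    using V.main_step[OF assms(2,3) c, of n m] by blast
  have "FR scale (\<lambda>x. (\<phi> ^^ n) (A x))" using V.FR_right[OF Fn AB(1)] .
  moreover have "FR scale (\<lambda>x. (\<psi> ^^ m) (B x))" using V.FR_right[OF Fm AB(2)] .
  ultimately have "FR scale (\<lambda>x. (((\<lambda>x. \<phi> x + \<psi> x) ^^ (n + m)) x - ((\<phi> ^^ n) (A x) + (\<psi> ^^ m) (B x)))
      + ((\<phi> ^^ n) (A x) + (\<psi> ^^ m) (B x)))"
    using V.FR_add[OF AB(3) V.FR_add] by blast
  then have "FR scale ((\<lambda>x. \<phi> x + \<psi> x) ^^ (n + m))" by simp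
  then show ?thesis unfolding finite_potent_def using V.fin_dim_of_FR by blast
qed

end
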